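(* Let $\gamma\in\mathcal S_n$ and $\sigma=(\varepsilon,\varepsilon,\gamma;(123))$. Fix a positive integer $d$, and let $r$ be the number of cycles of $\gamma$ of length $d$. Suppose there do not exist lengths $d',d''$ of cycles of $\gamma$ (not necessarily distinct cycles) with $d\notin\{d',d''\}$ and $\operatorname{lcm}(d,d')=\operatorname{lcm}(d,d'')=\operatorname{lcm}(d',d'')$. Then $\sigma\notin\mathrm{Par}(n)$ if either <ul> <li>(i) $r=1$ and $n+d\equiv1\pmod3$, or</li> <li>(ii) $3\mid d$ and $3\nmid nr$.</li> </ul>
   Context: A Latin square of order $n$ is an $n\times n$ array with rows, columns and symbols indexed by $[n]$, each symbol occurring once in each row and each column, with triple set $O(L)$. Permutations act on the right; $\varepsilon$ is the identity; fixed points count as cycles of length $1$. A paratopism $(\alpha,\beta,\gamma;(123))$ maps $L$ to $L^\sigma$ with triple set $\{(z\gamma,x\alpha,y\beta):(x,y,z)\in O(L)\}$; it is an autoparatopism of $L$ if $L^\sigma=L$. $\mathrm{Par}(n)$ is the set of paratopisms that are autoparatopisms of at least one Latin square of order $n$. *)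

theory Defs
  imports "HOL-Combinatorics.Permutations"
begin

definition latin_square :: "nat \<Rightarrow> (nat \<Rightarrow> nat \<Rightarrow> nat) \<Rightarrow> bool" where
  "latin_square n L \<longleftrightarrow>
     (\<forall>x<n. \<forall>y<n. L x y < n) \<and>
     (\<forall>x<n. inj_on (\<lambda>y. L x y) {..<n}) \<and>
     (\<forall>y<n. inj_on (\<lambda>x. L x y) {..<n})"

definition triples :: "nat \<Rightarrow> (nat \<Rightarrow> nat \<Rightarrow> nat) \<Rightarrow> (nat \<times> nat \<times> nat) set" where
  "triples n L = {(x, y, L x y) | x y. x < n \<and> y < n}"

text \<open>Image of L under the paratopism (alpha, beta, gamma; (123)):
  triple set {(z gamma, x alpha, y beta) : (x,y,z) in O(L)} (maps act on the right,
  i.e. z gamma = gamma z).\<close>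

definition para123_image ::
  "(nat \<Rightarrow> nat) \<Rightarrow> (nat \<Rightarrow> nat) \<Rightarrow> (nat \<Rightarrow> nat) \<Rightarrow> nat \<Rightarrow> (nat \<Rightarrow> nat \<Rightarrow> nat)
     \<Rightarrow> (nat \<times> nat \<times> nat) set" where
  "para123_image \<alpha> \<beta> \<gamma> n L = {(\<gamma> z, \<alpha> x, \<beta> y) | x y z. (x, y, z) \<in> triples n L}"

definition is_autoparatopism123 ::
  "nat \<Rightarrow> (nat \<Rightarrow> nat) \<Rightarrow> (nat \<Rightarrow> nat) \<Rightarrow> (nat \<Rightarrow> nat) \<Rightarrow> (nat \<Rightarrow> nat \<Rightarrow> nat) \<Rightarrow> bool" where
  "is_autoparatopism123 n \<alpha> \<beta> \<gamma> L \<longleftrightarrow> para123_image \<alpha> \<beta> \<gamma> n L = triples n L"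

definition in_Par123 :: "nat \<Rightarrow> (nat \<Rightarrow> nat) \<Rightarrow> (nat \<Rightarrow> nat) \<Rightarrow> (nat \<Rightarrow> nat) \<Rightarrow> bool" where
  "in_Par123 n \<alpha> \<beta> \<gamma> \<longleftrightarrow>
     \<alpha> permutes {..<n} \<and> \<beta> permutes {..<n} \<and> \<gamma> permutes {..<n} \<and>
     (\<exists>L. latin_square n L \<and> is_autoparatopism123 n \<alpha> \<beta> \<gamma> L)"

text \<open>Cycles of a permutation: its orbits (fixed points are cycles of length 1).\<close>

definition cyc :: "(nat \<Rightarrow> nat) \<Rightarrow> nat \<Rightarrow> nat set" where
  "cyc g x = {(g ^^ k) x | k. True}"

definition cycle_lengths :: "nat \<Rightarrow> (nat \<Rightarrow> nat) \<Rightarrow> nat set" where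
  "cycle_lengths n g = {card (cyc g x) | x. x < n}"

definition num_cycles_of_length :: "nat \<Rightarrow> (nat \<Rightarrow> nat) \<Rightarrow> nat \<Rightarrow> nat" where
  "num_cycles_of_length n g d = card {cyc g x | x. x < n \<and> card (cyc g x) = d}"

end

theory Submission imports Defs begin

lemma funpow_app: "(f^^a) ((f^^b) t) = (f^^(a+b)) t"
  by (simp add: funpow_add)

lemma funpow_fixpt: "h t = t \<Longrightarrow> (h^^k) t = t"
  by (induction k) auto

lemma funpow_mod:
  assumes "(g^^N) x = x"
  shows "(g^^k) x = (g^^(k mod N)) x"
proof -
  have fx: "(g^^(N*q)) x = x" for q
  proof (induction q)
    case (Suc q)
    have "(g^^(N*Suc q)) x = (g^^N) ((g^^(N*q)) x)" by (simp add: funpow_app)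
    then show ?case using Suc assms by simp
  qed simp
  have "(g^^k) x = (g^^(k mod N + N*(k div N))) x" by simp
  also have "\<dots> = (g^^(k mod N)) ((g^^(N*(k div N))) x)" by (simp add: funpow_app)
  finally show ?thesis using fx by simp
qed

definition per :: "(nat \<Rightarrow> nat) \<Rightarrow> nat \<Rightarrow> nat" where
  "per g x = (LEAST p. 0 < p \<and> (g^^p) x = x)"

lemma per_props:
  assumes "0 < p" "(g^^p) x = x"
  shows "0 < per g x" "(g^^per g x) x = x" "\<And>q. 0<q \<Longrightarrow> q < per g x \<Longrightarrow> (g^^q) x \<noteq> x"
  using LeastI[of "\<lambda>p. 0<p \<and> (g^^p) x = x" p] not_less_Least[of _ "\<lambda>p. 0<p \<and> (g^^p) x = x"] assms
  unfolding per_def by auto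

lemma fix_iff:
  assumes "0 < p" "(g^^p) x = x"
  shows "(g^^k) x = x \<longleftrightarrow> per g x dvd k"
proof
  assume "per g x dvd k"
  then show "(g^^k) x = x" using funpow_mod[OF per_props(2)[OF assms], of k] by simp
next
  assume h: "(g^^k) x = x"
  have "(g^^(k mod per g x)) x = x" using h funpow_mod[OF per_props(2)[OF assms], of k] by simp
  moreover have "k mod per g x < per g x" using per_props(1)[OF assms] by simp
  ultimately have "k mod per g x = 0" using per_props(3)[OF assms] by blast
  then show "per g x dvd k" by auto
qed

lemma cyc_eq:
  assumes "0 < p" "(g^^p) x = x"
  shows "cyc g x = (\<lambda>k. (g^^k) x) ` {..<per g x}"
proof
  show "cyc g x \<subseteq> (\<lambda>k. (g^^k) x) ` {..<per g x}"
  proof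
    fix u assume "u \<in> cyc g x"
    then obtain k where "u = (g^^k) x" unfolding cyc_def by auto
    then have "u = (g^^(k mod per g x)) x" using funpow_mod[OF per_props(2)[OF assms]] by simp
    moreover have "k mod per g x < per g x" using per_props(1)[OF assms] by simp
    ultimately show "u \<in> (\<lambda>k. (g^^k) x) ` {..<per g x}" by auto
  qed
qed (auto simp: cyc_def)

lemma card_cyc:
  assumes "inj g" "0 < p" "(g^^p) x = x"
  shows "card (cyc g x) = per g x"
proof -
  have "inj_on (\<lambda>k. (g^^k) x) {..<per g x}"
  proof -
    have *: False if "i < j" "j < per g x" "(g^^i) x = (g^^j) x" for i j
    proof -
      have "(g^^i) ((g^^(j-i)) x) = (g^^i) x" using that by (simp add: funpow_app)
      then have "(g^^(j-i)) x = x" using inj_fn[OF assms(1), of i] by (simp add: inj_eq)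
      then show False using per_props(3)[OF assms(2,3), of "j-i"] that by simp
    qed
    show ?thesis
      by (rule inj_onI) (metis * linorder_neqE_nat lessThan_iff)
  qed
  then show ?thesis using cyc_eq[OF assms(2,3)] by (simp add: card_image)
qed

lemma cyc_funpow:
  assumes "0 < p" "(g^^p) x = x"
  shows "cyc g ((g^^k) x) = cyc g x"
proof
  show "cyc g ((g^^k) x) \<subseteq> cyc g x" by (auto simp: cyc_def funpow_app)
  show "cyc g x \<subseteq> cyc g ((g^^k) x)"
  proof
    fix u assume "u \<in> cyc g x"
    then obtain j where u: "u = (g^^j) x" unfolding cyc_def by auto
    let ?P = "per g x"
    have P: "?P > 0" using per_props(1)[OF assms] .
    have "k \<le> ?P * k" using P by simp
    have "(g^^(j + ?P*k)) x = (g^^j) x"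
      using funpow_mod[OF per_props(2)[OF assms], of "j + ?P*k"]
        funpow_mod[OF per_props(2)[OF assms], of j] by simp
    moreover have "j + ?P*k = (j + ?P*k - k) + k" using \<open>k \<le> ?P*k\<close> by linarith
    ultimately have "u = (g^^(j + ?P*k - k)) ((g^^k) x)" using u by (metis funpow_app)
    then show "u \<in> cyc g ((g^^k) x)" unfolding cyc_def by auto
  qed
qed

lemma free_dvd:
  assumes "finite A" "0 < N"
  shows "(\<And>t. t \<in> A \<Longrightarrow> f t \<in> A) \<Longrightarrow> (\<And>t. t \<in> A \<Longrightarrow> (f^^N) t = t) \<Longrightarrow>
     (\<And>t j. t \<in> A \<Longrightarrow> 0 < j \<Longrightarrow> j < N \<Longrightarrow> (f^^j) t \<noteq> t) \<Longrightarrow> N dvd card A"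
  using assms(1)
proof (induction A rule: finite_psubset_induct)
  case (psubset A)
  show ?case
  proof (cases "A = {}")
    case True then show ?thesis by simp
  next
    case False
    then obtain t where t: "t \<in> A" by blast
    define Orb where "Orb = (\<lambda>j. (f^^j) t) ` {..<N}"
    have inA: "(f^^j) t \<in> A" for j by (induction j) (auto intro: psubset.prems(1) t)
    have OA: "Orb \<subseteq> A" using inA Orb_def by auto
    have tO: "t \<in> Orb" using assms(2) Orb_def by force
    have Nt: "(f^^N) t = t" using psubset.prems(2) t .
    have *: False if "i < j" "j < N" "(f^^i) t = (f^^j) t" for i j
    proof -
      have "(f^^(N - j + i)) t = (f^^(N-j)) ((f^^i) t)" by (simp add: funpow_app)
      also have "\<dots> = (f^^(N-j)) ((f^^j) t)" using that by simp
      also have "\<dots> = (f^^N) t" using that by (simp add: funpow_app)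
      finally have "(f^^(N - j + i)) t = t" using Nt by simp
      moreover have "0 < N - j + i" "N - j + i < N" using that by auto
      ultimately show False using psubset.prems(3)[OF t, of "N - j + i"] by metis
    qed
    have "inj_on (\<lambda>j. (f^^j) t) {..<N}"
      by (rule inj_onI) (metis * linorder_neqE_nat lessThan_iff)
    then have cardO: "card Orb = N" using Orb_def by (simp add: card_image)
    have sub: "A - Orb \<subset> A" using tO t by blast
    have "N dvd card (A - Orb)"
    proof (rule psubset.IH[OF sub])
      fix s assume s: "s \<in> A - Orb"
      show "f s \<in> A - Orb"
      proof (rule ccontr)
        assume "f s \<notin> A - Orb"
        then have "f s \<in> Orb" using psubset.prems(1) s by blast
        then obtain j where j: "f s = (f^^j) t" using Orb_def by auto
        have "s = (f^^N) s" using psubset.prems(2) s by simp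
        also have "\<dots> = (f^^((N-1)+1)) s" using assms(2) by simp
        also have "\<dots> = (f^^(N-1)) ((f^^1) s)" by (simp only: funpow_app)
        also have "\<dots> = (f^^(N-1+j)) t" using j by (simp add: funpow_app)
        also have "\<dots> = (f^^((N-1+j) mod N)) t" using funpow_mod[OF Nt] by simp
        finally have "s \<in> Orb" using Orb_def assms(2) by auto
        then show False using s by blast
      qed
    next
      fix s assume "s \<in> A - Orb" then show "(f^^N) s = s" using psubset.prems(2) by simp
    next
      fix s j assume "s \<in> A - Orb" "0 < j" "j < N" then show "(f^^j) s \<noteq> s"
        using psubset.prems(3) by simp
    qed
    moreover have "card A = card Orb + card (A - Orb)"
      using OA psubset.hyps(1) by (metis card_Diff_subset card_mono le_add_diff_inverse finite_subset)
    ultimately show ?thesis using cardO by simp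
  qed
qed


locale LS =
  fixes n :: nat and \<gamma> :: "nat \<Rightarrow> nat" and L :: "nat \<Rightarrow> nat \<Rightarrow> nat"
  assumes perm: "\<gamma> permutes {..<n}" and lat: "latin_square n L"
    and aut: "\<And>x y. x < n \<Longrightarrow> y < n \<Longrightarrow> L (\<gamma> (L x y)) x = y"
begin

lemma Lr: "x < n \<Longrightarrow> y < n \<Longrightarrow> L x y < n"
  using lat unfolding latin_square_def by blast

lemma rowinj: "x < n \<Longrightarrow> y < n \<Longrightarrow> y' < n \<Longrightarrow> L x y = L x y' \<Longrightarrow> y = y'"
  using lat unfolding latin_square_def inj_on_def by blast

lemma colinj: "x < n \<Longrightarrow> x' < n \<Longrightarrow> y < n \<Longrightarrow> L x y = L x' y \<Longrightarrow> x = x'"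
  using lat unfolding latin_square_def inj_on_def by blast

lemma gr: "x < n \<Longrightarrow> (\<gamma>^^k) x < n"
  using permutes_in_funpow_image[OF perm] by simp

lemma gr1: "x < n \<Longrightarrow> \<gamma> x < n"
  using gr[of x 1] by simp

lemma ginj: "inj \<gamma>" using permutes_inj[OF perm] .

lemma exper: "\<exists>p>0. (\<gamma>^^p) x = x"
proof -
  have "permutation \<gamma>" using perm permutation_permutes by blast
  then obtain p where "p > 0" "(\<gamma>^^p) x = x" using permutation_self by metis
  then show ?thesis by blast
qed

lemma lenper: "card (cyc \<gamma> x) = per \<gamma> x"
  using exper card_cyc[OF ginj] by blast

lemma lfix: "(\<gamma>^^k) x = x \<longleftrightarrow> card (cyc \<gamma> x) dvd k"
  using exper fix_iff lenper by metis

lemma lenpos: "card (cyc \<gamma> x) > 0"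
  using exper per_props(1) lenper by metis

lemma cycpow: "cyc \<gamma> ((\<gamma>^^k) x) = cyc \<gamma> x"
  using exper cyc_funpow by metis

lemma lenpow: "card (cyc \<gamma> ((\<gamma>^^k) x)) = card (cyc \<gamma> x)"
  using cycpow by simp

lemma aut3: assumes "x < n" "y < n" shows "L (\<gamma> x) (\<gamma> y) = \<gamma> (L x y)"
proof -
  define z where "z = L x y"
  have z: "z < n" using Lr assms z_def by simp
  have 1: "L (\<gamma> z) x = y" using aut assms z_def by simp
  have 2: "L (\<gamma> y) (\<gamma> z) = x" using aut[of "\<gamma> z" x] 1 gr1 z assms by simp
  have "L (\<gamma> x) (\<gamma> y) = \<gamma> z" using aut[of "\<gamma> y" "\<gamma> z"] 2 gr1 z assms by simp
  then show ?thesis using z_def by simp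
qed

lemma autk: assumes "x < n" "y < n" shows "L ((\<gamma>^^k) x) ((\<gamma>^^k) y) = (\<gamma>^^k) (L x y)"
proof (induction k)
  case (Suc k)
  have "L ((\<gamma>^^Suc k) x) ((\<gamma>^^Suc k) y) = \<gamma> (L ((\<gamma>^^k) x) ((\<gamma>^^k) y))"
    using aut3 gr assms by simp
  then show ?case using Suc by simp
qed simp

lemma lcm3:
  assumes "x < n" "y < n"
  defines "a \<equiv> card (cyc \<gamma> x)" and "b \<equiv> card (cyc \<gamma> y)" and "c \<equiv> card (cyc \<gamma> (L x y))"
  shows "lcm a b = lcm a c" "lcm a c = lcm b c"
proof -
  have c1: "c dvd lcm a b"
  proof -
    let ?k = "lcm a b"
    have "(\<gamma>^^?k) x = x" "(\<gamma>^^?k) y = y" using lfix a_def b_def by auto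
    then have "(\<gamma>^^?k) (L x y) = L x y" using autk[OF assms(1,2), of ?k] by simp
    then show ?thesis using lfix c_def by simp
  qed
  have a1: "a dvd lcm b c"
  proof -
    let ?k = "lcm b c"
    have "(\<gamma>^^?k) (L x y) = L x y" "(\<gamma>^^?k) y = y" using lfix c_def b_def by auto
    then have "L ((\<gamma>^^?k) x) y = L x y" using autk[OF assms(1,2), of ?k] by simp
    then have "(\<gamma>^^?k) x = x" using colinj gr assms(1,2) by blast
    then show ?thesis using lfix a_def by simp
  qed
  have b1: "b dvd lcm a c"
  proof -
    let ?k = "lcm a c"
    have "(\<gamma>^^?k) (L x y) = L x y" "(\<gamma>^^?k) x = x" using lfix c_def a_def by auto
    then have "L x ((\<gamma>^^?k) y) = L x y" using autk[OF assms(1,2), of ?k] by simp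
    then have "(\<gamma>^^?k) y = y" using rowinj gr assms(1,2) by blast
    then show ?thesis using lfix b_def by simp
  qed
  show "lcm a b = lcm a c"
    by (rule dvd_antisym) (auto intro!: lcm_least c1 b1)
  show "lcm a c = lcm b c"
    by (rule dvd_antisym) (auto intro!: lcm_least c1 b1 a1 intro: dvd_trans[OF _ dvd_lcm1] dvd_trans[OF _ dvd_lcm2])
qed


definition ff :: "nat \<times> nat \<Rightarrow> nat \<times> nat" where
  "ff = (\<lambda>(x, y). (\<gamma> (L x y), x))"

lemma ff2: "u < n \<Longrightarrow> v < n \<Longrightarrow> ff (ff (u, v)) = (\<gamma> v, \<gamma> (L u v))"
  unfolding ff_def using aut Lr gr1 by simp

lemma ff3: "u < n \<Longrightarrow> v < n \<Longrightarrow> ff (ff (ff (u, v))) = (\<gamma> u, \<gamma> v)"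
proof -
  assume uv: "u < n" "v < n"
  have "ff (ff (ff (u, v))) = ff (\<gamma> v, \<gamma> (L u v))" using ff2 uv by simp
  also have "\<dots> = (\<gamma> (L (\<gamma> v) (\<gamma> (L u v))), \<gamma> v)" unfolding ff_def by simp
  also have "L (\<gamma> v) (\<gamma> (L u v)) = u"
    using aut[of "\<gamma> (L u v)" u] aut[of u v] uv Lr gr1 by simp
  finally show ?thesis by simp
qed

lemma ff3k: "x < n \<Longrightarrow> y < n \<Longrightarrow> (ff^^(3*k)) (x, y) = ((\<gamma>^^k) x, (\<gamma>^^k) y)"
proof (induction k)
  case (Suc k)
  have "(ff^^(3*Suc k)) (x, y) = (ff^^3) ((ff^^(3*k)) (x, y))" by (simp add: funpow_app)
  also have "\<dots> = (ff^^3) ((\<gamma>^^k) x, (\<gamma>^^k) y)" using Suc by simp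
  also have "\<dots> = ff (ff (ff ((\<gamma>^^k) x, (\<gamma>^^k) y)))" by (simp add: numeral_3_eq_3)
  also have "\<dots> = ((\<gamma>^^Suc k) x, (\<gamma>^^Suc k) y)" using ff3 gr Suc.prems by simp
  finally show ?case .
qed simp

lemma main:
  assumes dpos: "d > 0"
    and hyp: "\<not> (\<exists>d' \<in> cycle_lengths n \<gamma>. \<exists>d'' \<in> cycle_lengths n \<gamma>.
             d \<notin> {d', d''} \<and> lcm d d' = lcm d d'' \<and> lcm d d'' = lcm d' d'')"
    and cases: "(num_cycles_of_length n \<gamma> d = 1 \<and> (n + d) mod 3 = 1) \<or>
         (3 dvd d \<and> \<not> 3 dvd (n * num_cycles_of_length n \<gamma> d))"
  shows False
proof -
  define len where "len x = card (cyc \<gamma> x)" for x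
  define D where "D = {x. x < n \<and> len x = d}"
  define r where "r = num_cycles_of_length n \<gamma> d"
  define m where "m = card D"
  have Dsub: "D \<subseteq> {..<n}" by (auto simp: D_def)
  have finD: "finite D" using Dsub finite_subset by blast
  have mn: "m \<le> n" using card_mono[OF _ Dsub] m_def by simp
  have B: "len (L x y) = d" if "x \<in> D" "y < n" "y \<notin> D" for x y
  proof (rule ccontr)
    assume nz: "len (L x y) \<noteq> d"
    have x: "x < n" "len x = d" using that D_def by auto
    have yd: "len y \<noteq> d" using that D_def by auto
    have "len y \<in> cycle_lengths n \<gamma>" "len (L x y) \<in> cycle_lengths n \<gamma>"
      using that x Lr unfolding cycle_lengths_def len_def by auto
    moreover have "lcm d (len y) = lcm d (len (L x y))" "lcm d (len (L x y)) = lcm (len y) (len (L x y))"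
      using lcm3[OF x(1) that(2)] x(2) unfolding len_def by auto
    ultimately have "\<exists>d' \<in> cycle_lengths n \<gamma>. \<exists>d'' \<in> cycle_lengths n \<gamma>.
             d \<notin> {d', d''} \<and> lcm d d' = lcm d d'' \<and> lcm d d'' = lcm d' d''"
      using nz yd by (intro bexI[of _ "len y"] bexI[of _ "len (L x y)"]) auto
    then show False using hyp by blast
  qed
  have row: "card {y \<in> D. L x y \<in> D} + (n - m) = m" if x: "x \<in> D" for x
  proof -
    have xn: "x < n" using x D_def by auto
    have inj: "inj_on (L x) {..<n}" using rowinj xn by (auto simp: inj_on_def)
    have img: "L x ` {..<n} = {..<n}"
    proof -
      have "L x ` {..<n} \<subseteq> {..<n}" using Lr xn by auto
      moreover have "card (L x ` {..<n}) = n" using card_image[OF inj] by simp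
      ultimately show ?thesis by (simp add: card_subset_eq)
    qed
    let ?N = "{y. y < n \<and> L x y \<notin> D}"
    have NI: "L x ` ?N = {..<n} - D"
    proof
      show "L x ` ?N \<subseteq> {..<n} - D" using Lr xn by auto
      show "{..<n} - D \<subseteq> L x ` ?N"
      proof
        fix w assume w: "w \<in> {..<n} - D"
        then obtain y where "y < n" "w = L x y" using img by (metis Diff_iff imageE lessThan_iff)
        then show "w \<in> L x ` ?N" using w by auto
      qed
    qed
    have "card ?N = card (L x ` ?N)"
    proof -
      have "?N \<subseteq> {..<n}" by auto
      then show ?thesis using card_image[OF inj_on_subset[OF inj]] by metis
    qed
    then have cN: "card ?N = n - m" using NI card_Diff_subset[OF finD Dsub] m_def by simp
    have NsubD: "?N \<subseteq> D"
    proof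
      fix y assume y: "y \<in> ?N"
      show "y \<in> D"
      proof (rule ccontr)
        assume "y \<notin> D"
        then have "len (L x y) = d" using B x y by auto
        then have "L x y \<in> D" using D_def Lr xn y by auto
        then show False using y by auto
      qed
    qed
    have "D = {y \<in> D. L x y \<in> D} \<union> ?N" using NsubD Dsub by auto
    moreover have "{y \<in> D. L x y \<in> D} \<inter> ?N = {}" by auto
    ultimately have "card D = card {y \<in> D. L x y \<in> D} + card ?N"
      using finD by (metis (no_types, lifting) card_Un_disjoint finite_Un)
    then show ?thesis using cN m_def by simp
  qed
  define T where "T = Sigma D (\<lambda>x. {y \<in> D. L x y \<in> D})"
  have finT: "finite T" unfolding T_def using finD by auto
  have cardT: "card T + m * (n - m) = m * m"
  proof -
    have "card T = (\<Sum>x\<in>D. card {y \<in> D. L x y \<in> D})"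
      unfolding T_def using finD by (simp add: card_SigmaI)
    then have "card T + m * (n - m) = (\<Sum>x\<in>D. card {y \<in> D. L x y \<in> D} + (n - m))"
      using m_def by (simp add: sum.distrib)
    also have "\<dots> = (\<Sum>x\<in>D. m)" using row by (rule sum.cong[OF refl])
    finally show ?thesis using m_def by simp
  qed
  have cardTi: "int (card T) = int m * (2 * int m - int n)"
  proof -
    have "int (card T) + int m * (int n - int m) = int m * int m"
      using cardT mn by (metis of_nat_add of_nat_mult of_nat_diff)
    then show ?thesis by (simp add: algebra_simps)
  qed
  define C where "C = {cyc \<gamma> x | x. x < n \<and> card (cyc \<gamma> x) = d}"
  have rC: "r = card C" unfolding r_def C_def num_cycles_of_length_def by simp
  have cycsub: "cyc \<gamma> x \<subseteq> {..<n}" if "x < n" for x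
    using gr that unfolding cyc_def by auto
  have selfin: "x \<in> cyc \<gamma> x" for x unfolding cyc_def by (auto intro: exI[of _ 0])
  have cyceq: "cyc \<gamma> u = cyc \<gamma> x" if "u \<in> cyc \<gamma> x" for u x
  proof -
    from that obtain k where "u = (\<gamma>^^k) x" unfolding cyc_def by auto
    then show ?thesis using cycpow by simp
  qed
  have DU: "D = \<Union>C"
  proof
    show "D \<subseteq> \<Union>C" using selfin unfolding D_def C_def len_def by blast
    show "\<Union>C \<subseteq> D"
    proof
      fix u assume "u \<in> \<Union>C"
      then obtain x where x: "x < n" "card (cyc \<gamma> x) = d" "u \<in> cyc \<gamma> x" unfolding C_def by auto
      then show "u \<in> D" using cycsub[OF x(1)] cyceq[OF x(3)] unfolding D_def len_def by auto
    qed
  qed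
  have disj: "pairwise disjnt C"
    unfolding pairwise_def disjnt_def C_def using cyceq by blast
  have mdr: "m = d * r"
  proof -
    have "m = sum card C" unfolding m_def DU
      by (rule card_Union_disjoint[OF disj]) (auto simp: C_def intro: finite_subset[OF cycsub])
    also have "\<dots> = sum (\<lambda>_. d) C" by (rule sum.cong) (auto simp: C_def)
    finally show ?thesis using rC by simp
  qed
  have Tmem: "x < n \<and> y < n \<and> len x = d \<and> len y = d \<and> L x y \<in> D" if "(x, y) \<in> T" for x y
    using that unfolding T_def D_def by auto
  have fT: "ff t \<in> T" if "t \<in> T" for t
  proof -
    obtain x y where t: "t = (x, y)" by fastforce
    have h: "x < n" "y < n" "len x = d" "len y = d" "L x y \<in> D" using Tmem that t by auto
    have "len (\<gamma> (L x y)) = d" using h lenpow[of 1 "L x y"] unfolding len_def D_def by simp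
    moreover have "\<gamma> (L x y) < n" using gr1 Lr h by simp
    moreover have "L (\<gamma> (L x y)) x = y" using aut h by simp
    ultimately show ?thesis using t h unfolding ff_def T_def D_def by auto
  qed
  have perT: "d dvd j" if "t \<in> T" "(ff^^j) t = t" for t j
  proof -
    obtain x y where t: "t = (x, y)" by fastforce
    have h: "x < n" "y < n" "len x = d" using Tmem that t by auto
    have "((ff^^j)^^3) t = t" using funpow_fixpt that(2) by metis
    then have "(ff^^(3*j)) t = t" by (simp add: funpow_mult mult.commute)
    then have "(\<gamma>^^j) x = x" using ff3k h t by simp
    then show ?thesis using lfix h unfolding len_def by simp
  qed
  have fullT: "(ff^^(3*d)) t = t" if "t \<in> T" for t
  proof -
    obtain x y where t: "t = (x, y)" by fastforce
    have h: "x < n" "y < n" "len x = d" "len y = d" using Tmem that t by auto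
    have "(\<gamma>^^d) x = x" "(\<gamma>^^d) y = y" using lfix h unfolding len_def by auto
    then show ?thesis using ff3k h t by simp
  qed
  have comm: "(ff^^a) ((ff^^b) u) = (ff^^b) ((ff^^a) u)" for a b u
    by (simp add: funpow_app add.commute)
  define F where "F = {t \<in> T. (ff^^d) t = t}"
  have FT: "F \<subseteq> T" unfolding F_def by auto
  have one: "(ff^^(3*d)) t = (ff^^(3*d-1)) (ff t)" for t
  proof -
    have "(ff^^(3*d)) t = (ff^^((3*d-1)+1)) t" using dpos by simp
    also have "\<dots> = (ff^^(3*d-1)) ((ff^^1) t)" by (simp only: funpow_app)
    finally show ?thesis by simp
  qed
  have dvd1: "3*d dvd card (T - F)"
  proof (rule free_dvd)
    show "finite (T - F)" using finT by simp
    show "0 < 3*d" using dpos by simp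
  next
    fix t assume t: "t \<in> T - F"
    show "ff t \<in> T - F"
    proof (rule ccontr)
      assume "ff t \<notin> T - F"
      then have fx: "(ff^^d) (ff t) = ff t" using fT t F_def by auto
      have tt: "t = (ff^^(3*d-1)) (ff t)" using one fullT t by simp
      have "(ff^^d) t = (ff^^(3*d-1)) ((ff^^d) (ff t))" using tt comm by metis
      also have "\<dots> = t" using fx tt by simp
      finally show False using t F_def by auto
    qed
  next
    fix t assume "t \<in> T - F" then show "(ff^^(3*d)) t = t" using fullT by simp
  next
    fix t j assume t: "t \<in> T - F" and j: "0 < j" "j < 3*d"
    show "(ff^^j) t \<noteq> t"
    proof
      assume fx: "(ff^^j) t = t"
      then obtain q where q: "j = d * q" using perT t by blast
      then have "q = 1 \<or> q = 2" using j dpos by (cases q) (auto, linarith?)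
      then show False
      proof
        assume "q = 1" then show False using fx q t F_def by auto
      next
        assume "q = 2"
        then have "(ff^^(2*d)) t = t" using fx q by (simp add: mult.commute)
        then have "(ff^^d) t = (ff^^d) ((ff^^(2*d)) t)" by simp
        also have "\<dots> = (ff^^(3*d)) t" by (simp add: funpow_app)
        also have "\<dots> = t" using fullT t by simp
        finally show False using t F_def by auto
      qed
    qed
  qed
  have dvd2: "d dvd card F"
  proof (rule free_dvd)
    show "finite F" using finT FT finite_subset by blast
    show "0 < d" using dpos .
  next
    fix t assume t: "t \<in> F"
    have "(ff^^d) (ff t) = ff ((ff^^d) t)" using comm[of d 1 t] by simp
    then show "ff t \<in> F" using t fT F_def by auto
  next
    fix t assume "t \<in> F" then show "(ff^^d) t = t" using F_def by simp
  next
    fix t j assume t: "t \<in> F" and j: "0 < j" "j < d"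
    show "(ff^^j) t \<noteq> t"
    proof
      assume "(ff^^j) t = t"
      then have "d dvd j" using perT[of t j] t FT by auto
      then have "d \<le> j" using j dvd_imp_le by blast
      then show False using j by simp
    qed
  qed
  have F3: "F = {}" if d3: "3 dvd d"
  proof (rule ccontr)
    assume "F \<noteq> {}"
    then obtain x y where xy: "(x, y) \<in> F" by auto
    obtain k where k: "d = 3 * k" using d3 by blast
    have h: "x < n" "y < n" "len x = d" using Tmem xy FT by auto
    have "(ff^^(3*k)) (x, y) = (x, y)" using xy F_def k by simp
    then have "(\<gamma>^^k) x = x" using ff3k h by simp
    then have "d dvd k" using lfix h unfolding len_def by simp
    moreover have "0 < k" "k < d" using k dpos by auto
    ultimately show False using dvd_imp_le by fastforce
  qed
  have Fle: "card F \<le> d" if "r = 1"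
  proof (cases "3 dvd d")
    case True then show ?thesis using F3 by simp
  next
    case False
    define k where "k = d div 3"
    have "inj_on fst F"
    proof (rule inj_onI)
      fix s t assume s: "s \<in> F" and t: "t \<in> F" and e: "fst s = fst t"
      obtain x y where sx: "s = (x, y)" by fastforce
      obtain y' where ty: "t = (x, y')" using e sx by (metis fst_conv surj_pair)
      have h: "x < n" "y < n" "y' < n" using Tmem s t sx ty FT by auto
      have "d mod 3 = 1 \<or> d mod 3 = 2" using False by presburger
      then show "s = t"
      proof
        assume "d mod 3 = 1"
        then have dk: "d = 1 + 3*k" using k_def by presburger
        have "(ff^^d) (u, v) = ff ((\<gamma>^^k) u, (\<gamma>^^k) v)" if "u < n" "v < n" for u v
          using dk ff3k[OF that] by (simp add: funpow_app[where f=ff and a=1 and b="3*k", symmetric])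
        then have "y = (\<gamma>^^k) x" "y' = (\<gamma>^^k) x"
          using s t sx ty h F_def unfolding ff_def by auto
        then show "s = t" using sx ty by simp
      next
        assume "d mod 3 = 2"
        then have dk: "d = 2 + 3*k" using k_def by presburger
        have "(ff^^d) (u, v) = ff (ff ((\<gamma>^^k) u, (\<gamma>^^k) v))" if "u < n" "v < n" for u v
          using dk ff3k[OF that] by (simp add: funpow_app[where f=ff and a=2 and b="3*k", symmetric] numeral_2_eq_2)
        then have "(ff^^d) (u, v) = ((\<gamma>^^Suc k) v, \<gamma> (L ((\<gamma>^^k) u) ((\<gamma>^^k) v)))" if "u < n" "v < n" for u v
          using ff2 gr that by simp
        then have "x = (\<gamma>^^Suc k) y" "x = (\<gamma>^^Suc k) y'"
          using s t sx ty h F_def by auto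
        then have "y = y'" using inj_fn[OF ginj, of "Suc k"] by (metis injD)
        then show "s = t" using sx ty by simp
      qed
    qed
    moreover have "fst ` F \<subseteq> D" using FT unfolding T_def by auto
    ultimately have "card F \<le> card D" using card_inj_on_le finD by blast
    then show ?thesis using m_def mdr that by simp
  qed
  have split: "card T = card (T - F) + card F"
    using FT finT by (metis card_Diff_subset card_mono le_add_diff_inverse2 finite_subset)
  from cases show False
  proof
    assume c: "num_cycles_of_length n \<gamma> d = 1 \<and> (n + d) mod 3 = 1"
    then have r1: "r = 1" using r_def by simp
    obtain q where q: "card (T - F) = 3 * d * q" using dvd1 by blast
    obtain e where e: "card F = d * e" using dvd2 by blast
    have "e \<le> 1" using Fle[OF r1] e dpos by (cases e) auto
    have "int (3 * d * q + d * e) = int d * (2 * int d - int n)"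
      using cardTi split q e mdr r1 by simp
    then have "int d * (3 * int q + int e) = int d * (2 * int d - int n)"
      by (simp add: algebra_simps)
    then have "3 * int q + int e = 2 * int d - int n" using dpos by simp
    then show False using c \<open>e \<le> 1\<close> by presburger
  next
    assume c: "3 dvd d \<and> \<not> 3 dvd (n * num_cycles_of_length n \<gamma> d)"
    then have F0: "F = {}" using F3 by simp
    obtain q where q: "card T = 3 * d * q" using dvd1 F0 by auto
    obtain s where s: "d = 3 * s" using c by blast
    have "int (3 * d * q) = int d * (int r * (2 * int d * int r - int n))"
      using cardTi q mdr by (simp add: algebra_simps)
    then have "int d * (3 * int q) = int d * (int r * (2 * int d * int r - int n))"
      by (simp add: algebra_simps)
    then have "3 * int q = int r * (2 * int d * int r - int n)" using dpos by simp
    then have "int n * int r = 3 * (2 * int s * int r * int r - int q)"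
      using s by (simp add: algebra_simps)
    then have "(3::int) dvd int (n * r)" by simp
    then have "3 dvd n * r" by presburger
    then show False using c r_def by simp
  qed
qed

end

theorem theorem5p1:
  fixes n d :: nat and \<gamma> :: "nat \<Rightarrow> nat"
  assumes "\<gamma> permutes {..<n}"
    and "d > 0"
    and "\<not> (\<exists>d' \<in> cycle_lengths n \<gamma>. \<exists>d'' \<in> cycle_lengths n \<gamma>.
             d \<notin> {d', d''} \<and> lcm d d' = lcm d d'' \<and> lcm d d'' = lcm d' d'')"
    and "(num_cycles_of_length n \<gamma> d = 1 \<and> (n + d) mod 3 = 1) \<or>
         (3 dvd d \<and> \<not> 3 dvd (n * num_cycles_of_length n \<gamma> d))"
  shows "\<not> in_Par123 n id id \<gamma>"
proof
  assume "in_Par123 n id id \<gamma>"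
  then obtain L where lat: "latin_square n L" and ap: "is_autoparatopism123 n id id \<gamma> L"
    unfolding in_Par123_def by blast
  have aut: "L (\<gamma> (L x y)) x = y" if "x < n" "y < n" for x y
  proof -
    have "(\<gamma> (L x y), x, y) \<in> para123_image id id \<gamma> n L"
      unfolding para123_image_def triples_def using that by auto
    then have "(\<gamma> (L x y), x, y) \<in> triples n L" using ap unfolding is_autoparatopism123_def by simp
    then show ?thesis unfolding triples_def by auto
  qed
  interpret LS n \<gamma> L using assms(1) lat aut by unfold_locales auto
  show False using main assms(2-4) by blast
qed

end
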